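(* Let $\boldsymbol{q}=(q_0,q_1,\ldots,q_n)$ be an instance of a symbolic generalized matrix chain and let $m$ be an index with $q_m=\min_i q_i$. Let $j\in\{1,\ldots,n\}$. Suppose $t_{\rm e}$ is a term of the form $\phi_{K_{\rm e}}(q_{j-1},q_j,q_m)$ or $\phi_{K_{\rm e}}(q_m,q_{j-1},q_j)$ in the cost function of one variant, and $t_{\rm o}$ is a term of the form $\phi_{K_{\rm o}}(q_{j-1},q_j,q_z)$ or $\phi_{K_{\rm o}}(q_z,q_{j-1},q_j)$ (for some index $z$) in the cost function of a variant (possibly the same variant). Then there exists a constant $\alpha\in\mathbb{R}_+$ (determined by the kernel cost functions of $K_{\rm e}$ and $K_{\rm o}$, not by the instance) such that $t_{\rm e}\le \alpha\, t_{\rm o}$.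
   Context: A generalized matrix chain (GMC) is a product $\mathrm{op}(M_1)\mathrm{op}(M_2)\cdots\mathrm{op}(M_n)$ where $M_i$ has size $q_{i-1}\times q_i$, $\mathrm{op}(M)\in\{M,M^T,M^{-1},M^{-T}\}$, and each $M_i$ carries a structure (general, symmetric, lower-triangular, upper-triangular; every non-general structure implies the matrix is square) and a property (singular, invertible, symmetric positive-definite, orthogonal). The shape of the chain (structures, properties, unary operators) is fixed; the sizes are symbolic. An instance is a vector $\boldsymbol{q}=(q_0,\ldots,q_n)\in\mathbb{N}^{n+1}$ consistent with the shape: if $M_i$ is necessarily square (non-general structure or inverted) then $q_{i-1}=q_i$. Transposition is ignored (it does not affect costs). Each parenthesization of the chain determines exactly one variant: a sequence of $n-1$ associations $\{(K_i,(a_i,b_i,c_i))\}_{i=1}^{n-1}$ with $0\le a_i<b_i<c_i\le n$, where the $i$-th association combines, via kernel $K_i$, an operand of size $q_{a_i}\times q_{b_i}$ with an operand of size $q_{b_i}\times q_{c_i}$, producing a $q_{a_i}\times q_{c_i}$ result. The variant is built by performing the leftmost available association first and, for each association: (1) if both operands are inverted, rewriting $X^{-1}Y^{-1}=(YX)^{-1}$ and propagating the inversion to the result; also propagating an inversion when one operand is inverted and general or symmetric and the other is orthogonal or non-singular triangular; (2) assigning the most specialized kernel for the operands' features (matrix-product kernels GEMM, SYMM, TRMM, SYSYMM, TRSYMM, TRTRMM; linear-solve kernels GEGESV, GESYSV, GETRSV, SYGESV, SYSYSV, SYTRSV, POGESV, POSYSV, POTRSV, TRSM, TRSYSV, TRTRSV,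 where in a solve the inverted operand is the coefficient matrix); (3) inferring structure, property and size of the result by fixed rules. The cost (FLOPs) of a variant $A$ on instance $\boldsymbol{q}$ is $T(A,\boldsymbol{q})=\sum_{(K,(a,b,c))\in A}\phi_K(q_a,q_b,q_c)$; each summand is called a term of the cost function. Every kernel cost $\phi_K$ has one of three forms with positive kernel-specific constants: Type I: $\phi(a,b,c)=\beta abc$; Type IIa: $\phi(a,b,c)=\beta_1a^3+\beta_2a^2c$; Type IIb: $\phi(a,b,c)=\beta_1c^3+\beta_2c^2a$. Type II kernels are exactly those solving a linear system with a non-triangular coefficient matrix and a general rectangular right-hand side (GEGESV with $\beta_1=2/3,\beta_2=2$; SYGESV and POGESV with $\beta_1=1/3,\beta_2=2$), IIa when the coefficient matrix is on the left (then $a=b$) and IIb when on the right (then $b=c$); all other kernels are Type I (e.g. GEMM $\beta=2$, TRMM and TRSM $\beta=1$, and kernels with two square operands such as SYSYMM with cost $2m^3$). *)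

theory Defs
  imports Main "HOL.Real"
begin

datatype struct = Gen | Sym | Low | Upp
datatype mprop = Singular | Invertible | SPD | Orthogonal
datatype uop = OpId | OpT | OpInv | OpInvT

definition inverted :: "uop \<Rightarrow> bool" where
  "inverted u \<longleftrightarrow> u = OpInv \<or> u = OpInvT"

text \<open>Shape of a chain: length n, and for i in 1..n structure, property and unary
  operator of M_i (transposition is ignored for costs).\<close>
record gmc =
  len :: nat
  st  :: "nat \<Rightarrow> struct"
  pr  :: "nat \<Rightarrow> mprop"
  uo  :: "nat \<Rightarrow> uop"

definition necessarily_square :: "gmc \<Rightarrow> nat \<Rightarrow> bool" where
  "necessarily_square G i \<longleftrightarrow>
     st G i \<noteq> Gen \<or> inverted (uo G i) \<or> pr G i \<noteq> Singular"

definition is_instance :: "gmc \<Rightarrow> (nat \<Rightarrow> nat) \<Rightarrow> bool" where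
  "is_instance G q \<longleftrightarrow>
     (\<forall>i \<le> len G. 0 < q i) \<and>
     (\<forall>i \<in> {1..len G}. necessarily_square G i \<longrightarrow> q (i - 1) = q i)"

datatype kname = GEMM | SYMM | TRMM | SYSYMM | TRSYMM | TRTRMM
  | GEGESV | GESYSV | GETRSV | SYGESV | SYSYSV | SYTRSV
  | POGESV | POSYSV | POTRSV | TRSM | TRSYSV | TRTRSV

text \<open>A kernel together with a flag telling whether the coefficient matrix of a
  solve is on the left (True) or on the right (False); product kernels use True.\<close>
type_synonym kernel = "kname \<times> bool"
type_synonym assoc = "kernel \<times> (nat \<times> nat \<times> nat)"

definition typeII :: "kname \<Rightarrow> bool" where
  "typeII k \<longleftrightarrow> k \<in> {GEGESV, SYGESV, POGESV}"

definition phi :: "(kname \<Rightarrow> real \<times> real) \<Rightarrow> kernel \<Rightarrow> real \<Rightarrow> real \<Rightarrow> real \<Rightarrow> real" where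
  "phi beta K a b c =
     (let (k, left) = K; (b1, b2) = beta k in
      if typeII k then
        (if left then b1 * a ^ 3 + b2 * a ^ 2 * c else b1 * c ^ 3 + b2 * c ^ 2 * a)
      else b1 * a * b * c)"

definition term_cost :: "(kname \<Rightarrow> real \<times> real) \<Rightarrow> (nat \<Rightarrow> nat) \<Rightarrow> assoc \<Rightarrow> real" where
  "term_cost beta q t =
     (case t of (K, (a, b, c)) \<Rightarrow> phi beta K (real (q a)) (real (q b)) (real (q c)))"

datatype feat = Feat (fstruct: struct) (fprop: mprop) (finv: bool)

definition is_GS :: "feat \<Rightarrow> bool" where
  "is_GS X \<longleftrightarrow> fstruct X = Gen \<or> fstruct X = Sym"

definition is_tri :: "feat \<Rightarrow> bool" where
  "is_tri X \<longleftrightarrow> fstruct X = Low \<or> fstruct X = Upp"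

definition special :: "feat \<Rightarrow> bool" where
  "special X \<longleftrightarrow> fprop X = Orthogonal \<or> (is_tri X \<and> fprop X \<noteq> Singular)"

definition prod_kernel :: "feat \<Rightarrow> feat \<Rightarrow> kname" where
  "prod_kernel X Y =
     (let s = fstruct X; t = fstruct Y in
      if s = Gen \<and> t = Gen then GEMM
      else if (s = Sym \<and> t = Gen) \<or> (s = Gen \<and> t = Sym) then SYMM
      else if (is_tri X \<and> t = Gen) \<or> (s = Gen \<and> is_tri Y) then TRMM
      else if s = Sym \<and> t = Sym then SYSYMM
      else if is_tri X \<and> is_tri Y then TRTRMM
      else TRSYMM)"

definition solve_kernel :: "feat \<Rightarrow> feat \<Rightarrow> kname" where
  "solve_kernel A B =
     (let r = fstruct B in
      if fstruct A = Gen then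
        (if r = Gen then GEGESV else if r = Sym then GESYSV else GETRSV)
      else if fstruct A = Sym \<and> fprop A = SPD then
        (if r = Gen then POGESV else if r = Sym then POSYSV else POTRSV)
      else if fstruct A = Sym then
        (if r = Gen then SYGESV else if r = Sym then SYSYSV else SYTRSV)
      else
        (if r = Gen then TRSM else if r = Sym then TRSYSV else TRTRSV))"

definition coef_kernel :: "feat \<Rightarrow> feat \<Rightarrow> bool \<Rightarrow> kernel" where
  "coef_kernel A B left =
     (if fprop A = Orthogonal then (prod_kernel A B, True) else (solve_kernel A B, left))"

definition infer :: "feat \<Rightarrow> feat \<Rightarrow> bool \<Rightarrow> feat" where
  "infer X Y i =
     Feat (if fstruct X = Low \<and> fstruct Y = Low then Low
           else if fstruct X = Upp \<and> fstruct Y = Upp then Upp else Gen)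
          (if fprop X = Orthogonal \<and> fprop Y = Orthogonal then Orthogonal
           else if fprop X \<noteq> Singular \<and> fprop Y \<noteq> Singular then Invertible
           else Singular)
          i"

definition combine :: "feat \<Rightarrow> feat \<Rightarrow> kernel \<times> feat" where
  "combine X Y =
     (if finv X \<and> finv Y then ((prod_kernel Y X, True), infer X Y True)
      else if finv X \<and> is_GS X \<and> special Y then (coef_kernel Y X True, infer X Y True)
      else if finv Y \<and> is_GS Y \<and> special X then (coef_kernel X Y False, infer X Y True)
      else if finv X then (coef_kernel X Y True, infer X Y False)
      else if finv Y then (coef_kernel Y X False, infer X Y False)
      else ((prod_kernel X Y, True), infer X Y False))"

definition leaf_feat :: "gmc \<Rightarrow> nat \<Rightarrow> feat" where
  "leaf_feat G i = Feat (st G i) (pr G i) (inverted (uo G i))"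

text \<open>Parenthesizations as binary trees; a tree with k leaves starting at
  boundary a covers M_(a+1) ... M_(a+k).\<close>
datatype ptree = Leaf | Node ptree ptree

fun nleaves :: "ptree \<Rightarrow> nat" where
  "nleaves Leaf = 1"
| "nleaves (Node l r) = nleaves l + nleaves r"

fun build :: "gmc \<Rightarrow> ptree \<Rightarrow> nat \<Rightarrow> feat \<times> assoc list" where
  "build G Leaf a = (leaf_feat G (Suc a), [])"
| "build G (Node l r) a =
     (let (fx, ax) = build G l a;
          b = a + nleaves l;
          (fy, ay) = build G r b;
          c = b + nleaves r;
          (K, fz) = combine fx fy
      in (fz, ax @ ay @ [(K, (a, b, c))]))"

definition variants :: "gmc \<Rightarrow> assoc list set" where
  "variants G = {snd (build G t 0) | t. nleaves t = len G}"

end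

theory Submission
  imports Defs
begin

definition sqok :: "(nat \<Rightarrow> nat) \<Rightarrow> feat \<Rightarrow> nat \<Rightarrow> nat \<Rightarrow> bool" where
  "sqok q F a c \<longleftrightarrow> ((finv F \<or> fstruct F \<noteq> Gen \<or> fprop F \<noteq> Singular) \<longrightarrow> q a = q c)"

definition hard :: "feat \<Rightarrow> bool" where
  "hard F \<longleftrightarrow> finv F \<and> is_GS F \<and> fprop F \<noteq> Orthogonal"

lemma prod_not_II: "\<not> typeII (prod_kernel X Y)"
  by (simp add: prod_kernel_def typeII_def Let_def)

lemma solve_tri_not_II: "is_tri A \<Longrightarrow> \<not> typeII (solve_kernel A B)"
  by (auto simp add: solve_kernel_def typeII_def Let_def is_tri_def)

lemma solve_II: "typeII (solve_kernel A B) \<Longrightarrow> is_GS A \<and> fstruct B = Gen"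
  by (cases "fstruct A"; cases "fstruct B"; cases "fprop A"; auto simp add: solve_kernel_def typeII_def Let_def is_GS_def split: if_splits)

lemma L1:
  assumes "typeII (fst (fst (combine X Y)))"
  shows "(snd (fst (combine X Y)) \<and> hard X) \<or> (\<not> snd (fst (combine X Y)) \<and> hard Y)"
  using assms
  by (auto simp add: combine_def coef_kernel_def prod_not_II hard_def special_def
      dest: solve_II split: if_splits dest!: solve_tri_not_II)

lemma L2:
  assumes "hard X" "sqok q Y b c"
  shows "q b = q c \<or> (typeII (fst (fst (combine X Y))) \<and> snd (fst (combine X Y)))"
  using assms
  by (cases "fstruct Y"; auto simp add: combine_def coef_kernel_def hard_def special_def sqok_def
      is_tri_def solve_kernel_def typeII_def Let_def is_GS_def)

lemma L3:
  assumes "hard Y" "sqok q X a b"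
  shows "q a = q b \<or> (typeII (fst (fst (combine X Y))) \<and> \<not> snd (fst (combine X Y)))"
  using assms
  by (cases "fstruct X"; auto simp add: combine_def coef_kernel_def hard_def special_def sqok_def
      is_tri_def solve_kernel_def typeII_def Let_def is_GS_def)

lemma L4:
  assumes "sqok q X a b" "sqok q Y b c"
  shows "sqok q (snd (combine X Y)) a c"
  using assms
  by (auto simp add: combine_def infer_def sqok_def special_def is_tri_def split: if_splits)

lemma nleaves_pos: "1 \<le> nleaves t"
  by (induction t) auto

lemma nleaves_one: assumes "nleaves t = 1" shows "t = Leaf"
  proof (cases t)
  case (Node l r)
  then show ?thesis using assms nleaves_pos[of l] nleaves_pos[of r] by simp
qed simp

definition assoc_ok :: "gmc \<Rightarrow> (nat \<Rightarrow> nat) \<Rightarrow> assoc \<Rightarrow> bool" where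
  "assoc_ok G q e \<longleftrightarrow> (case e of (K, (a', b', c')) \<Rightarrow>
     a' < b' \<and> b' < c' \<and>
     (\<exists>X Y. fst (combine X Y) = K \<and> sqok q X a' b' \<and> sqok q Y b' c' \<and>
        (b' = Suc a' \<longrightarrow> X = leaf_feat G b') \<and> (c' = Suc b' \<longrightarrow> Y = leaf_feat G c')))"

lemma build_inv:
  assumes inst: "is_instance G q"
  shows "a + nleaves t \<le> len G \<Longrightarrow> build G t a = (F, L) \<Longrightarrow>
    sqok q F a (a + nleaves t) \<and>
    (\<forall>e\<in>set L. assoc_ok G q e \<and> a \<le> fst (snd e) \<and> snd (snd (snd e)) \<le> a + nleaves t)"
proof (induction t arbitrary: a F L)
  case Leaf
  then have "Suc a \<in> {1..len G}" by auto
  with inst have "necessarily_square G (Suc a) \<longrightarrow> q a = q (Suc a)"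
    unfolding is_instance_def by fastforce
  with Leaf show ?case
    by (auto simp: sqok_def leaf_feat_def necessarily_square_def)
next
  case (Node l r)
  obtain fx ax where bx: "build G l a = (fx, ax)" by fastforce
  define b where "b = a + nleaves l"
  obtain fy ay where by': "build G r b = (fy, ay)" by fastforce
  define c where "c = b + nleaves r"
  obtain K fz where cb: "combine fx fy = (K, fz)" by fastforce
  have FL: "F = fz" "L = ax @ ay @ [(K, (a, b, c))]"
    using Node.prems(2) bx by' cb by (auto simp: b_def c_def Let_def)
  have c_eq: "c = a + nleaves (Node l r)" by (simp add: b_def c_def)
  have IHl: "sqok q fx a b \<and> (\<forall>e\<in>set ax. assoc_ok G q e \<and> a \<le> fst (snd e) \<and> snd (snd (snd e)) \<le> b)"
    using Node.IH(1)[OF _ bx] Node.prems(1) by (simp add: b_def)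
  have IHr: "sqok q fy b c \<and> (\<forall>e\<in>set ay. assoc_ok G q e \<and> b \<le> fst (snd e) \<and> snd (snd (snd e)) \<le> c)"
    using Node.IH(2)[OF _ by'] Node.prems(1) by (simp add: b_def c_def)
  have ab: "a < b" "b < c" using nleaves_pos[of l] nleaves_pos[of r] by (auto simp: b_def c_def)
  have lx: "b = Suc a \<longrightarrow> fx = leaf_feat G b"
    using nleaves_one[of l] bx by (auto simp: b_def)
  have ly: "c = Suc b \<longrightarrow> fy = leaf_feat G c"
    using nleaves_one[of r] by' by (auto simp: c_def)
  have "assoc_ok G q (K, (a, b, c))"
  proof -
    have "fst (combine fx fy) = K" using cb by simp
    then show ?thesis unfolding assoc_ok_def prod.case using ab IHl IHr lx ly by blast
  qed
  moreover have "sqok q F a c"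
    using L4[of q fx a b fy c] IHl IHr cb FL by simp
  ultimately show ?case
    using IHl IHr ab FL c_eq by fastforce
qed


lemma phi_I: "\<not> typeII k \<Longrightarrow> phi beta (k, l) a b c = fst (beta k) * a * b * c"
  by (simp add: phi_def split: prod.splits)

lemma phi_IIL: "typeII k \<Longrightarrow> phi beta (k, True) a b c = fst (beta k) * a ^ 3 + snd (beta k) * a ^ 2 * c"
  by (simp add: phi_def split: prod.splits)

lemma phi_IIR: "typeII k \<Longrightarrow> phi beta (k, False) a b c = fst (beta k) * c ^ 3 + snd (beta k) * c ^ 2 * a"
  by (simp add: phi_def split: prod.splits)

lemma al1:
  fixes b1 b2 A C :: real
  assumes "0 < b1" "0 < b2" "0 \<le> A" "0 \<le> C"
  shows "min b1 b2 * (A * A * C) \<le> b1 * A ^ 3 + b2 * A ^ 2 * C"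
proof -
  have "min b1 b2 * (A * A * C) \<le> b2 * (A * A * C)"
    by (rule mult_right_mono) (use assms in auto)
  also have "\<dots> = b2 * A ^ 2 * C" by (simp add: power2_eq_square)
  also have "\<dots> \<le> b1 * A ^ 3 + b2 * A ^ 2 * C" using assms by simp
  finally show ?thesis .
qed

lemma al_hard:
  fixes b1 b2 A C :: real
  assumes "0 < b1" "0 < b2" "0 \<le> A" "0 \<le> C"
  shows "min b1 b2 * A ^ 3 \<le> b1 * A ^ 3 + b2 * A ^ 2 * C"
proof -
  have "min b1 b2 * A ^ 3 \<le> b1 * A ^ 3"
    by (rule mult_right_mono) (use assms in auto)
  also have "\<dots> \<le> b1 * A ^ 3 + b2 * A ^ 2 * C" using assms by simp
  finally show ?thesis .
qed

lemma al3:
  fixes b1 b2 P :: real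
  assumes "0 \<le> P"
  shows "min b1 b2 * P \<le> b1 * P"
  by (rule mult_right_mono) (use assms in auto)

lemma au1:
  fixes e1 e2 x mm :: real
  assumes "0 < e1" "0 < e2" "0 \<le> mm" "mm \<le> x"
  shows "e1 * x ^ 3 + e2 * x ^ 2 * mm \<le> (e1 + e2) * x ^ 3"
proof -
  have "e2 * x ^ 2 * mm \<le> e2 * x ^ 2 * x"
    by (rule mult_left_mono) (use assms in auto)
  then show ?thesis by (simp add: algebra_simps power3_eq_cube power2_eq_square)
qed

lemma au2:
  fixes e1 e2 x y mm :: real
  assumes "0 < e1" "0 < e2" "0 \<le> mm" "mm \<le> y" "x = mm"
  shows "e1 * mm ^ 3 + e2 * mm ^ 2 * y \<le> (e1 + e2) * (x * y * mm)"
proof -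
  have "e1 * (mm * mm) * mm \<le> e1 * (mm * mm) * y"
    by (rule mult_left_mono) (use assms in auto)
  then show ?thesis using assms by (simp add: algebra_simps power3_eq_cube power2_eq_square)
qed

lemma au3:
  fixes e1 e2 x y mm :: real
  assumes "0 < e1" "0 < e2" "0 \<le> mm" "mm \<le> x" "y = mm"
  shows "e1 * mm ^ 3 + e2 * mm ^ 2 * x \<le> (e1 + e2) * (x * y * mm)"
proof -
  have "e1 * (mm * mm) * mm \<le> e1 * (mm * mm) * x"
    by (rule mult_left_mono) (use assms in auto)
  then show ?thesis using assms by (simp add: algebra_simps power3_eq_cube power2_eq_square)
qed

lemma gen_lower:
  assumes pos: "\<forall>k. 0 < fst (beta k) \<and> 0 < snd (beta k)"
    and K: "fst (combine X Y) = (k, l)" and sx: "sqok q X a b" and sy: "sqok q Y b c"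
  shows "min (fst (beta k)) (snd (beta k)) * (real (q a) * real (q b) * real (q c))
         \<le> phi beta (k, l) (real (q a)) (real (q b)) (real (q c))"
proof (cases "typeII k")
  case False
  then show ?thesis using al3[of "real (q a) * real (q b) * real (q c)" "fst (beta k)" "snd (beta k)"]
    by (simp add: phi_I mult.assoc)
next
  case True
  from L1[of X Y] K True have "(l \<and> hard X) \<or> (\<not> l \<and> hard Y)" by simp
  then show ?thesis
  proof
    assume h: "l \<and> hard X"
    then have "q a = q b" using sx by (simp add: hard_def sqok_def)
    then show ?thesis using h True pos al1[of "fst (beta k)" "snd (beta k)" "real (q a)" "real (q c)"]
      by (simp add: phi_IIL)
  next
    assume h: "\<not> l \<and> hard Y"
    then have "q b = q c" using sy by (simp add: hard_def sqok_def)
    then show ?thesis using h True pos al1[of "fst (beta k)" "snd (beta k)" "real (q c)" "real (q a)"]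
      by (simp add: phi_IIR mult.commute mult.left_commute)
  qed
qed

lemma hard_leaf_sq:
  assumes "is_instance G q" "1 \<le> j" "j \<le> len G" "hard (leaf_feat G j)"
  shows "q (j - 1) = q j"
  using assms unfolding is_instance_def hard_def leaf_feat_def necessarily_square_def
  by auto


lemma upper:
  assumes pos: "\<forall>k. 0 < fst (beta k) \<and> 0 < snd (beta k)"
    and inst: "is_instance G q" and mlen: "m \<le> len G" and mmin: "\<forall>i \<le> len G. q m \<le> q i"
    and j1: "1 \<le> j" and jl: "j \<le> len G"
    and ok: "assoc_ok G q ((k, l), (ae, be, ce))"
    and form: "(ae, be, ce) = (j - 1, j, m) \<or> (ae, be, ce) = (m, j - 1, j)"
  shows "term_cost beta q ((k, l), (ae, be, ce))
           \<le> (fst (beta k) + snd (beta k)) * (real (q (j - 1)) * real (q j) * real (q m))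
         \<or> (hard (leaf_feat G j) \<and> term_cost beta q ((k, l), (ae, be, ce))
              \<le> (fst (beta k) + snd (beta k)) * real (q (j - 1)) ^ 3)"
proof -
  define x where "x = real (q (j - 1))"
  define y where "y = real (q j)"
  define mm where "mm = real (q m)"
  define e1 where "e1 = fst (beta k)"
  define e2 where "e2 = snd (beta k)"
  have e: "0 < e1" "0 < e2" using pos by (auto simp: e1_def e2_def)
  have mx: "mm \<le> x" "mm \<le> y" "0 \<le> mm"
    using mmin jl by (auto simp: x_def y_def mm_def)
  obtain X Y where XY: "fst (combine X Y) = (k, l)" "sqok q X ae be" "sqok q Y be ce"
    "be = Suc ae \<longrightarrow> X = leaf_feat G be" "ce = Suc be \<longrightarrow> Y = leaf_feat G ce"
    using ok unfolding assoc_ok_def by auto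
  have jj: "Suc (j - 1) = j" using j1 by simp
  show ?thesis
  proof (cases "typeII k")
    case False
    have "term_cost beta q ((k, l), (ae, be, ce)) = e1 * (x * y * mm)"
      using form False by (auto simp: term_cost_def phi_I e1_def x_def y_def mm_def ac_simps)
    moreover have "e1 * (x * y * mm) \<le> (e1 + e2) * (x * y * mm)"
      by (rule mult_right_mono) (use e mx in \<open>auto simp: x_def y_def\<close>)
    ultimately show ?thesis by (simp add: e1_def e2_def x_def y_def mm_def)
  next
    case True
    from L1[of X Y] XY(1) True have "(l \<and> hard X) \<or> (\<not> l \<and> hard Y)" by simp
    then show ?thesis
    proof
      assume h: "l \<and> hard X"
      then have sq: "q ae = q be" using XY(2) by (simp add: hard_def sqok_def)
      have tc: "term_cost beta q ((k, l), (ae, be, ce)) = e1 * real (q ae) ^ 3 + e2 * real (q ae) ^ 2 * real (q ce)"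
        using h True by (simp add: term_cost_def phi_IIL e1_def e2_def)
      from form show ?thesis
      proof
        assume f: "(ae, be, ce) = (j - 1, j, m)"
        then have "X = leaf_feat G j" using XY(4) jj by auto
        then have "hard (leaf_feat G j)" using h by simp
        moreover have "term_cost beta q ((k, l), (ae, be, ce)) \<le> (e1 + e2) * x ^ 3"
          using tc f au1[OF e mx(3) mx(1)] by (simp add: x_def mm_def)
        ultimately show ?thesis by (simp add: e1_def e2_def x_def)
      next
        assume f: "(ae, be, ce) = (m, j - 1, j)"
        then have "x = mm" using sq by (simp add: x_def mm_def)
        then have "term_cost beta q ((k, l), (ae, be, ce)) \<le> (e1 + e2) * (x * y * mm)"
          using tc f au2[OF e mx(3) mx(2)] by (simp add: y_def mm_def)
        then show ?thesis by (simp add: e1_def e2_def x_def y_def mm_def)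
      qed
    next
      assume h: "\<not> l \<and> hard Y"
      then have sq: "q be = q ce" using XY(3) by (simp add: hard_def sqok_def)
      have tc: "term_cost beta q ((k, l), (ae, be, ce)) = e1 * real (q ce) ^ 3 + e2 * real (q ce) ^ 2 * real (q ae)"
        using h True by (simp add: term_cost_def phi_IIR e1_def e2_def)
      from form show ?thesis
      proof
        assume f: "(ae, be, ce) = (j - 1, j, m)"
        then have "y = mm" using sq by (simp add: y_def mm_def)
        then have "term_cost beta q ((k, l), (ae, be, ce)) \<le> (e1 + e2) * (x * y * mm)"
          using tc f au3[OF e mx(3) mx(1)] by (simp add: x_def mm_def)
        then show ?thesis by (simp add: e1_def e2_def x_def y_def mm_def)
      next
        assume f: "(ae, be, ce) = (m, j - 1, j)"
        then have "Y = leaf_feat G j" using XY(5) jj by auto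
        then have hl: "hard (leaf_feat G j)" using h by simp
        then have "x = y" using hard_leaf_sq[OF inst j1 jl] by (simp add: x_def y_def)
        then have "term_cost beta q ((k, l), (ae, be, ce)) \<le> (e1 + e2) * x ^ 3"
          using tc f au1[OF e mx(3) mx(1)] by (simp add: x_def y_def mm_def)
        with hl show ?thesis by (simp add: e1_def e2_def x_def)
      qed
    qed
  qed
qed


lemma lower:
  assumes pos: "\<forall>k. 0 < fst (beta k) \<and> 0 < snd (beta k)"
    and inst: "is_instance G q" and mmin: "\<forall>i \<le> len G. q m \<le> q i"
    and j1: "1 \<le> j" and jl: "j \<le> len G" and zl: "z \<le> len G"
    and ok: "assoc_ok G q ((k, l), (ao, bo, co))"
    and form: "(ao, bo, co) = (j - 1, j, z) \<or> (ao, bo, co) = (z, j - 1, j)"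
  shows "min (fst (beta k)) (snd (beta k)) * (real (q (j - 1)) * real (q j) * real (q m))
           \<le> term_cost beta q ((k, l), (ao, bo, co))
         \<and> (hard (leaf_feat G j) \<longrightarrow> min (fst (beta k)) (snd (beta k)) * real (q (j - 1)) ^ 3
              \<le> term_cost beta q ((k, l), (ao, bo, co)))"
proof -
  define x where "x = real (q (j - 1))"
  define y where "y = real (q j)"
  define mm where "mm = real (q m)"
  define w where "w = real (q z)"
  define o1 where "o1 = fst (beta k)"
  define o2 where "o2 = snd (beta k)"
  define cm where "cm = min o1 o2"
  have e: "0 < o1" "0 < o2" using pos by (auto simp: o1_def o2_def)
  have cm0: "0 \<le> cm" using e by (simp add: cm_def)
  have mx: "mm \<le> w" "0 \<le> mm" "0 \<le> x" "0 \<le> y" "0 \<le> w"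
    using mmin zl by (auto simp: w_def mm_def x_def y_def)
  obtain X Y where XY: "fst (combine X Y) = (k, l)" "sqok q X ao bo" "sqok q Y bo co"
    "bo = Suc ao \<longrightarrow> X = leaf_feat G bo" "co = Suc bo \<longrightarrow> Y = leaf_feat G co"
    using ok unfolding assoc_ok_def by auto
  have jj: "Suc (j - 1) = j" using j1 by simp
  have gl: "cm * (x * y * w) \<le> term_cost beta q ((k, l), (ao, bo, co))"
    using gen_lower[OF pos XY(1-3)] form
    by (auto simp: term_cost_def cm_def o1_def o2_def x_def y_def w_def ac_simps)
  have "cm * (x * y * mm) \<le> cm * (x * y * w)"
    using mx cm0 by (intro mult_left_mono) (auto intro: mult_left_mono)
  with gl have A: "cm * (x * y * mm) \<le> term_cost beta q ((k, l), (ao, bo, co))" by linarith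
  have B: "cm * x ^ 3 \<le> term_cost beta q ((k, l), (ao, bo, co))" if hl: "hard (leaf_feat G j)"
  proof -
    have xy: "x = y" using hard_leaf_sq[OF inst j1 jl hl] by (simp add: x_def y_def)
    from form show ?thesis
    proof
      assume f: "(ao, bo, co) = (j - 1, j, z)"
      then have "X = leaf_feat G j" using XY(4) jj by auto
      then have "q bo = q co \<or> (typeII k \<and> l)" using L2[OF hl XY(3)] XY(1) by simp
      then show ?thesis
      proof
        assume "q bo = q co"
        then have "w = y" using f by (simp add: w_def y_def)
        then show ?thesis using gl xy by (simp add: power3_eq_cube)
      next
        assume t: "typeII k \<and> l"
        then have "term_cost beta q ((k, l), (ao, bo, co)) = o1 * x ^ 3 + o2 * x ^ 2 * w"
          using f by (simp add: term_cost_def phi_IIL o1_def o2_def x_def w_def)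
        then show ?thesis using al_hard[OF e mx(3) mx(5)] by (simp add: cm_def)
      qed
    next
      assume f: "(ao, bo, co) = (z, j - 1, j)"
      then have "Y = leaf_feat G j" using XY(5) jj by auto
      then have "q ao = q bo \<or> (typeII k \<and> \<not> l)" using L3[OF hl XY(2)] XY(1) by simp
      then show ?thesis
      proof
        assume "q ao = q bo"
        then have "w = x" using f by (simp add: w_def x_def)
        then show ?thesis using gl xy by (simp add: power3_eq_cube)
      next
        assume t: "typeII k \<and> \<not> l"
        then have "term_cost beta q ((k, l), (ao, bo, co)) = o1 * y ^ 3 + o2 * y ^ 2 * w"
          using f by (simp add: term_cost_def phi_IIR o1_def o2_def y_def w_def)
        then show ?thesis using al_hard[OF e mx(4) mx(5)] xy by (simp add: cm_def)
      qed
    qed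
  qed
  show ?thesis using A B by (simp add: cm_def o1_def o2_def x_def y_def mm_def)
qed


lemma combine_bound:
  fixes T S C c P :: real
  assumes "0 < C" "0 < c" "T \<le> C * P" "c * P \<le> S"
  shows "T \<le> C / c * S"
proof -
  have "C * P = C / c * (c * P)" using assms by simp
  also have "\<dots> \<le> C / c * S" using assms by (intro mult_left_mono) auto
  finally show ?thesis using assms by linarith
qed

lemma variant_inv:
  assumes "is_instance G q" "A \<in> variants G" "(K, (a, b, c)) \<in> set A"
  shows "assoc_ok G q (K, (a, b, c)) \<and> c \<le> len G"
proof -
  obtain t where t: "nleaves t = len G" "A = snd (build G t 0)"
    using assms(2) unfolding variants_def by auto
  obtain F where "build G t 0 = (F, A)" using t by (metis prod.collapse)
  from build_inv[OF assms(1), of 0 t F A] this t(1) assms(3) show ?thesis by auto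
qed

theorem lemma1:
  fixes beta :: "kname \<Rightarrow> real \<times> real"
  assumes "\<forall>k. 0 < fst (beta k) \<and> 0 < snd (beta k)"
  shows "\<forall>Ke Ko. \<exists>\<alpha>::real. 0 < \<alpha> \<and>
    (\<forall>G q m j z Ae Ao ae be ce ao bo co.
       is_instance G q \<and> m \<le> len G \<and> (\<forall>i \<le> len G. q m \<le> q i) \<and>
       1 \<le> j \<and> j \<le> len G \<and>
       Ae \<in> variants G \<and> Ao \<in> variants G \<and>
       (Ke, (ae, be, ce)) \<in> set Ae \<and>
       ((ae, be, ce) = (j - 1, j, m) \<or> (ae, be, ce) = (m, j - 1, j)) \<and>
       (Ko, (ao, bo, co)) \<in> set Ao \<and>
       ((ao, bo, co) = (j - 1, j, z) \<or> (ao, bo, co) = (z, j - 1, j))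
       \<longrightarrow> term_cost beta q (Ke, (ae, be, ce)) \<le> \<alpha> * term_cost beta q (Ko, (ao, bo, co)))"
proof (intro allI)
  fix Ke Ko :: kernel
  obtain ke le where Ke: "Ke = (ke, le)" by fastforce
  obtain ko lo where Ko: "Ko = (ko, lo)" by fastforce
  define C where "C = fst (beta ke) + snd (beta ke)"
  define c where "c = min (fst (beta ko)) (snd (beta ko))"
  have C0: "0 < C" using assms[rule_format, of ke] by (simp add: C_def)
  have c0: "0 < c" using assms[rule_format, of ko] by (simp add: c_def)
  show "\<exists>\<alpha>::real. 0 < \<alpha> \<and>
    (\<forall>G q m j z Ae Ao ae be ce ao bo co.
       is_instance G q \<and> m \<le> len G \<and> (\<forall>i \<le> len G. q m \<le> q i) \<and>
       1 \<le> j \<and> j \<le> len G \<and>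
       Ae \<in> variants G \<and> Ao \<in> variants G \<and>
       (Ke, (ae, be, ce)) \<in> set Ae \<and>
       ((ae, be, ce) = (j - 1, j, m) \<or> (ae, be, ce) = (m, j - 1, j)) \<and>
       (Ko, (ao, bo, co)) \<in> set Ao \<and>
       ((ao, bo, co) = (j - 1, j, z) \<or> (ao, bo, co) = (z, j - 1, j))
       \<longrightarrow> term_cost beta q (Ke, (ae, be, ce)) \<le> \<alpha> * term_cost beta q (Ko, (ao, bo, co)))"
  proof (intro exI[of _ "C / c"] conjI allI impI)
    show "0 < C / c" using C0 c0 by simp
  next
    fix G q m j z Ae Ao ae be ce ao bo co
    assume h: "is_instance G q \<and> m \<le> len G \<and> (\<forall>i \<le> len G. q m \<le> q i) \<and>
       1 \<le> j \<and> j \<le> len G \<and>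
       Ae \<in> variants G \<and> Ao \<in> variants G \<and>
       (Ke, (ae, be, ce)) \<in> set Ae \<and>
       ((ae, be, ce) = (j - 1, j, m) \<or> (ae, be, ce) = (m, j - 1, j)) \<and>
       (Ko, (ao, bo, co)) \<in> set Ao \<and>
       ((ao, bo, co) = (j - 1, j, z) \<or> (ao, bo, co) = (z, j - 1, j))"
    then have inst: "is_instance G q" by simp
    have ve: "assoc_ok G q ((ke, le), (ae, be, ce))"
      using variant_inv[OF inst, of Ae Ke ae be ce] h Ke by simp
    have vo: "assoc_ok G q ((ko, lo), (ao, bo, co))" "co \<le> len G"
      using variant_inv[OF inst, of Ao Ko ao bo co] h Ko by simp_all
    have "ao < bo" "bo < co" using vo(1) by (auto simp: assoc_ok_def)
    then have zl: "z \<le> len G" using h vo(2) by auto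
    have U: "term_cost beta q ((ke, le), (ae, be, ce)) \<le> C * (real (q (j - 1)) * real (q j) * real (q m))
         \<or> (hard (leaf_feat G j) \<and> term_cost beta q ((ke, le), (ae, be, ce)) \<le> C * real (q (j - 1)) ^ 3)"
      using upper[OF assms, of G q m j ke le ae be ce] h ve by (simp add: C_def)
    have L: "c * (real (q (j - 1)) * real (q j) * real (q m)) \<le> term_cost beta q ((ko, lo), (ao, bo, co))
         \<and> (hard (leaf_feat G j) \<longrightarrow> c * real (q (j - 1)) ^ 3 \<le> term_cost beta q ((ko, lo), (ao, bo, co)))"
      using lower[OF assms, of G q m j z ko lo ao bo co] h vo zl by (simp add: c_def)
    show "term_cost beta q (Ke, (ae, be, ce)) \<le> C / c * term_cost beta q (Ko, (ao, bo, co))"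
      using U L combine_bound[OF C0 c0] Ke Ko by blast
  qed
qed

end
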